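(* Let $\mathbf L=\{L_1,\dots,L_n\}$ be a finite multiset of positive rationals indexed so that $L_1\ge L_2\ge\cdots\ge L_n$, let $k\in\mathbb N_{>0}$, and suppose $L_{co}\ne l^\star$. Then $(I_{co},\,i\mapsto 1,\,i\mapsto\lceil k/i\rceil)$ is an admissible restriction. Moreover $|\mathcal C(I_{co},1,\lceil k/i\rceil)|=\sum_{i\in I_{co}}\lceil k/i\rceil$, and in the worst case (pairwise distinct lengths, where $|I_{co}|=\min(k-1,n)$) this is $\Theta\bigl(k\log\min(k,n)\bigr)$.
   Context: $m(l)=\sum_{i=1}^n\lfloor L_i/l\rfloor$, $c(l)=\sum_i(\lceil L_i/l\rceil-1)$; $l$ feasible iff $m(l)\ge k$; $l^\star$ is the unique optimal cut length (feasible length minimizing $c$ among feasible lengths; equals the largest feasible length). $L^{(k)}$ is the $k$-th largest element of $\mathbf L$ with multiplicity; $L_{co}=L^{(k)}$ if $k\le n$, $L_{co}=0$ if $k>n$; $I_{co}=\{i: L_i>L_{co}\}$. Candidate multiset $\mathcal C(I,f_l,f_u)=\biguplus_{i\in I}\{L_i/j: j\in\mathbb N,\ f_l(i)\le j\le f_u(i)\}$ (one occurrence per pair). A triple $(I,f_l,f_u)$ with $f_l,f_u:I\to\mathbb N_{>0}$ is an admissible restriction if (i) for all $i\in I$, $f_l(i)=1$ or $L_i/(f_l(i)-1)$ is infeasible; (ii) for all $i\in I$, $L_i/f_u(i)$ is feasible; (iii) for all $i'\notin I$, $L_{i'}$ is feasible and $L_{i'}\ne l^\star$. *)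

theory Defs
  imports Complex_Main "HOL-Library.Multiset"
begin

text \<open>The multiset of lengths is given as L_1 >= ... >= L_n, i.e. a function
  L :: nat => rat on the index set {1..n}.\<close>

definition num_pieces :: "(nat \<Rightarrow> rat) \<Rightarrow> nat \<Rightarrow> rat \<Rightarrow> int" where
  "num_pieces L n l = (\<Sum>i=1..n. \<lfloor>L i / l\<rfloor>)"

definition num_cuts :: "(nat \<Rightarrow> rat) \<Rightarrow> nat \<Rightarrow> rat \<Rightarrow> int" where
  "num_cuts L n l = (\<Sum>i=1..n. \<lceil>L i / l\<rceil> - 1)"

definition feasible :: "(nat \<Rightarrow> rat) \<Rightarrow> nat \<Rightarrow> nat \<Rightarrow> rat \<Rightarrow> bool" where
  "feasible L n k l \<longleftrightarrow> 0 < l \<and> int k \<le> num_pieces L n l"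

definition lstar :: "(nat \<Rightarrow> rat) \<Rightarrow> nat \<Rightarrow> nat \<Rightarrow> rat" where
  "lstar L n k = (GREATEST l. feasible L n k l)"

text \<open>For L sorted non-increasingly, the k-th largest element with multiplicity is L k.\<close>
definition L_co :: "(nat \<Rightarrow> rat) \<Rightarrow> nat \<Rightarrow> nat \<Rightarrow> rat" where
  "L_co L n k = (if k \<le> n then L k else 0)"

definition I_co :: "(nat \<Rightarrow> rat) \<Rightarrow> nat \<Rightarrow> nat \<Rightarrow> nat set" where
  "I_co L n k = {i \<in> {1..n}. L i > L_co L n k}"

definition candidates ::
  "(nat \<Rightarrow> rat) \<Rightarrow> nat set \<Rightarrow> (nat \<Rightarrow> nat) \<Rightarrow> (nat \<Rightarrow> nat) \<Rightarrow> rat multiset" where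
  "candidates L I fl fu = (\<Sum>i\<in>I. image_mset (\<lambda>j. L i / of_nat j) (mset_set {fl i..fu i}))"

definition admissible_restriction ::
  "(nat \<Rightarrow> rat) \<Rightarrow> nat \<Rightarrow> nat \<Rightarrow> nat set \<Rightarrow> (nat \<Rightarrow> nat) \<Rightarrow> (nat \<Rightarrow> nat) \<Rightarrow> bool" where
  "admissible_restriction L n k I fl fu \<longleftrightarrow>
     I \<subseteq> {1..n} \<and>
     (\<forall>i\<in>I. 0 < fl i \<and> 0 < fu i) \<and>
     (\<forall>i\<in>I. fl i = 1 \<or> \<not> feasible L n k (L i / of_nat (fl i - 1))) \<and>
     (\<forall>i\<in>I. feasible L n k (L i / of_nat (fu i))) \<and>
     (\<forall>i'\<in>{1..n} - I. feasible L n k (L i') \<and> L i' \<noteq> lstar L n k)"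

definition ceil_div :: "nat \<Rightarrow> nat \<Rightarrow> nat" where
  "ceil_div k i = nat \<lceil>(of_nat k :: rat) / of_nat i\<rceil>"

end

theory Submission imports Defs "HOL-Analysis.Harmonic_Numbers" begin

lemma pieces_mono:
  assumes "0 < l" "\<forall>j\<in>{1..n}. g j \<le> \<lfloor>L j / l\<rfloor>"
  shows "sum g {1..n} \<le> num_pieces L n l"
  unfolding num_pieces_def using assms by (intro sum_mono) auto

lemma floor_nonneg_div:
  assumes "0 < (x::rat)" "0 < l" shows "0 \<le> \<lfloor>x / l\<rfloor>"
  using assms by simp

lemma lstar_props:
  fixes L :: "nat \<Rightarrow> rat"
  assumes n: "1 \<le> n" and pos: "\<forall>i\<in>{1..n}. 0 < L i"
    and top: "\<forall>j\<in>{1..n}. L j \<le> L 1" and k: "0 < k"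
  shows "feasible L n k (lstar L n k) \<and> (\<forall>l. feasible L n k l \<longrightarrow> l \<le> lstar L n k)"
proof -
  define l0 where "l0 = L 1 / of_nat k"
  have L1: "0 < L 1" using pos n by auto
  have l0pos: "0 < l0" using L1 k by (simp add: l0_def)
  have fl0: "feasible L n k l0"
  proof -
    have "sum (\<lambda>j. if j = 1 then int k else 0) {1..n} \<le> num_pieces L n l0"
      using pos l0pos L1 k by (intro pieces_mono) (auto simp: l0_def)
    moreover have "sum (\<lambda>j. if j = 1 then int k else 0) {1..n} = int k"
      using n by (simp add: sum.delta)
    ultimately show ?thesis using l0pos by (simp add: feasible_def)
  qed
  define S where "S = {l. feasible L n k l \<and> (\<exists>j\<in>{1..n}. \<exists>t\<in>{1..k}. l = L j / of_nat t)}"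
  have finS: "finite S"
  proof -
    have "S \<subseteq> (\<lambda>(j,t). L j / of_nat t) ` ({1..n} \<times> {1..k})" unfolding S_def by force
    thus ?thesis by (rule finite_subset) auto
  qed
  have l0S: "l0 \<in> S" using fl0 n k unfolding S_def l0_def by force
  define m where "m = Max S"
  have mS: "m \<in> S" using finS l0S Max_in unfolding m_def by blast
  have l0m: "l0 \<le> m" using finS l0S unfolding m_def by simp
  have bound: "l \<le> m" if fl: "feasible L n k l" for l
  proof (cases "l \<le> l0")
    case True thus ?thesis using l0m by simp
  next
    case False
    hence ll0: "l0 < l" by simp
    have lpos: "0 < l" using fl by (simp add: feasible_def)
    define t where "t j = nat \<lfloor>L j / l\<rfloor>" for j
    have tint: "int (t j) = \<lfloor>L j / l\<rfloor>" if "j \<in> {1..n}" for j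
    proof -
      have "0 < L j" using pos that by auto
      hence "0 \<le> \<lfloor>L j / l\<rfloor>" using lpos by simp
      thus ?thesis by (simp add: t_def)
    qed
    have tle: "of_nat (t j) * l \<le> L j" if "j \<in> {1..n}" for j
    proof -
      have "of_int \<lfloor>L j / l\<rfloor> \<le> L j / l" by (rule of_int_floor_le)
      hence "of_nat (t j) \<le> L j / l" using tint[OF that]
        by (metis of_int_of_nat_eq)
      thus ?thesis using lpos by (simp add: field_simps)
    qed
    have tk: "t j \<le> k" if "j \<in> {1..n}" for j
    proof -
      have "of_nat (t j) * l \<le> L 1" using tle[OF that] top that by force
      moreover have "L 1 = of_nat k * l0" using k by (simp add: l0_def)
      moreover have "of_nat k * l0 < of_nat k * l" using ll0 k by simp
      ultimately have "of_nat (t j) * l < of_nat k * l" by simp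
      hence "of_nat (t j) < (of_nat k :: rat)" using lpos by simp
      thus ?thesis by simp
    qed
    define J where "J = {j\<in>{1..n}. 1 \<le> t j}"
    have sumt: "(\<Sum>j=1..n. int (t j)) = num_pieces L n l"
      unfolding num_pieces_def using tint by (intro sum.cong) auto
    have Jne: "J \<noteq> {}"
    proof
      assume "J = {}"
      hence "\<forall>j\<in>{1..n}. t j = 0" unfolding J_def by force
      hence "(\<Sum>j=1..n. int (t j)) = 0" by simp
      thus False using sumt fl k by (simp add: feasible_def)
    qed
    have finJ: "finite J" unfolding J_def by simp
    define f where "f j = L j / of_nat (t j)" for j
    define l' where "l' = Min (f ` J)"
    obtain j0 where j0: "j0 \<in> J" "l' = f j0"
    proof -
      have "l' \<in> f ` J" using Min_in[of "f ` J"] finJ Jne unfolding l'_def by blast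
      thus ?thesis using that by blast
    qed
    have l'le: "l' \<le> f j" if "j \<in> J" for j
      using finJ that unfolding l'_def by simp
    have lf: "l \<le> f j" if "j \<in> J" for j
    proof -
      have "j \<in> {1..n}" "1 \<le> t j" using that by (auto simp: J_def)
      thus ?thesis using tle[of j] unfolding f_def by (simp add: field_simps)
    qed
    have l'pos: "0 < l'" using lf[OF j0(1)] j0 lpos by simp
    have fl': "feasible L n k l'"
    proof -
      have "(\<Sum>j=1..n. int (t j)) \<le> num_pieces L n l'"
      proof (intro pieces_mono[OF l'pos] ballI)
        fix j assume j: "j \<in> {1..n}"
        show "int (t j) \<le> \<lfloor>L j / l'\<rfloor>"
        proof (cases "j \<in> J")
          case True
          hence t1: "1 \<le> t j" by (simp add: J_def)
          have "l' \<le> L j / of_nat (t j)" using l'le[OF True] by (simp add: f_def)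
          hence "of_nat (t j) * l' \<le> L j" using t1 by (simp add: field_simps)
          hence "of_nat (t j) \<le> L j / l'" using l'pos by (simp add: field_simps)
          thus ?thesis by (simp add: le_floor_iff)
        next
          case False
          hence "t j = 0" using j by (simp add: J_def)
          moreover have "0 < L j" using pos j by auto
          ultimately show ?thesis using l'pos by simp
        qed
      qed
      thus ?thesis using sumt fl l'pos by (simp add: feasible_def)
    qed
    have "l' \<in> S"
    proof -
      have "j0 \<in> {1..n}" "t j0 \<in> {1..k}" using j0(1) tk by (auto simp: J_def)
      thus ?thesis using fl' j0(2) unfolding S_def f_def by blast
    qed
    hence "l' \<le> m" using finS unfolding m_def by simp
    thus ?thesis using lf[OF j0(1)] j0(2) by simp
  qed
  have "lstar L n k = m"
    unfolding lstar_def
    using mS bound by (intro Greatest_equality) (auto simp: S_def)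
  thus ?thesis using mS bound by (auto simp: S_def)
qed

lemma ceil_div_bounds:
  assumes i: "0 < i"
  shows "k \<le> ceil_div k i * i \<and> ceil_div k i * i < k + i"
proof -
  define q where "q = (of_nat k :: rat) / of_nat i"
  have q0: "0 \<le> q" by (simp add: q_def)
  have c0: "0 \<le> \<lceil>q\<rceil>" using q0 by simp
  have ci: "int (ceil_div k i) = \<lceil>q\<rceil>" using c0 by (simp add: ceil_div_def q_def)
  have cr: "(of_nat (ceil_div k i) :: rat) = of_int \<lceil>q\<rceil>"
    by (metis ci of_int_of_nat_eq)
  have h: "of_int \<lceil>q\<rceil> - 1 < q \<and> q \<le> of_int \<lceil>q\<rceil>" by (rule ceiling_correct)
  have ir: "(0::rat) < of_nat i" using i by simp
  have "of_nat k / of_nat i \<le> (of_nat (ceil_div k i) :: rat)"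
    using h cr by (simp add: q_def)
  hence "of_nat k \<le> (of_nat (ceil_div k i) :: rat) * of_nat i"
    using ir by (simp add: pos_divide_le_eq)
  hence a: "k \<le> ceil_div k i * i" by (metis of_nat_le_iff of_nat_mult)
  have "(of_nat (ceil_div k i) :: rat) * of_nat i < of_nat k + of_nat i"
    using h ir cr by (simp add: q_def field_simps)
  hence b: "ceil_div k i * i < k + i" by (metis of_nat_less_iff of_nat_mult of_nat_add)
  show ?thesis using a b by simp
qed

lemma size_cand:
  assumes "finite I"
  shows "size (candidates L I (\<lambda>i. 1) fu) = (\<Sum>i\<in>I. fu i)"
  unfolding candidates_def using assms
  by (induction I rule: finite_induct) (auto simp: size_mset_set)

lemma pieces_lower:
  fixes L :: "nat \<Rightarrow> rat"
  assumes pos: "\<forall>i\<in>{1..n}. 0 < L i"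
    and sorted: "\<forall>i\<in>{1..n}. \<forall>j\<in>{1..n}. i \<le> j \<longrightarrow> L j \<le> L i"
    and i: "i \<in> {1..n}" and c: "0 < c" and l: "0 < l" and lc: "of_nat c * l \<le> L i"
  shows "int (i * c) \<le> num_pieces L n l"
proof -
  have "sum (\<lambda>j. if j \<le> i then int c else 0) {1..n} \<le> num_pieces L n l"
  proof (intro pieces_mono[OF l] ballI)
    fix j assume j: "j \<in> {1..n}"
    show "(if j \<le> i then int c else 0) \<le> \<lfloor>L j / l\<rfloor>"
    proof (cases "j \<le> i")
      case True
      hence "L i \<le> L j" using sorted i j by auto
      hence "of_nat c \<le> L j / l" using lc l by (simp add: field_simps)
      thus ?thesis using True by (simp add: le_floor_iff)
    next
      case False
      have "0 < L j" using pos j by auto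
      thus ?thesis using False l by simp
    qed
  qed
  moreover have "sum (\<lambda>j. if j \<le> i then int c else 0) {1..n} = int (i * c)"
  proof -
    have "sum (\<lambda>j. if j \<le> i then int c else 0) {1..n} = sum (\<lambda>j. int c) {1..i}"
    proof -
      have "{1..n} \<inter> {j. j \<le> i} = {1..i}" using i by auto
      thus ?thesis by (simp add: sum.If_cases)
    qed
    thus ?thesis by simp
  qed
  ultimately show ?thesis by simp
qed

lemma I_co_sub:
  fixes L :: "nat \<Rightarrow> rat"
  assumes pos: "\<forall>i\<in>{1..n}. 0 < L i"
    and sorted: "\<forall>i\<in>{1..n}. \<forall>j\<in>{1..n}. i \<le> j \<longrightarrow> L j \<le> L i"
    and k: "0 < k"
  shows "I_co L n k \<subseteq> {1..min (k-1) n}"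
proof
  fix i assume "i \<in> I_co L n k"
  hence i: "i \<in> {1..n}" "L i > L_co L n k" by (auto simp: I_co_def)
  show "i \<in> {1..min (k-1) n}"
  proof (cases "k \<le> n")
    case True
    hence "L i > L k" using i by (simp add: L_co_def)
    hence "i < k" using sorted i True k by (metis atLeastAtMost_iff leD less_one linorder_not_less not_gr_zero)
    thus ?thesis using i by auto
  next
    case False thus ?thesis using i by auto
  qed
qed

lemma I_co_eq:
  fixes L :: "nat \<Rightarrow> rat"
  assumes pos: "\<forall>i\<in>{1..n}. 0 < L i"
    and sorted: "\<forall>i\<in>{1..n}. \<forall>j\<in>{1..n}. i \<le> j \<longrightarrow> L j \<le> L i"
    and dist: "\<forall>i\<in>{1..n}. \<forall>j\<in>{1..n}. i \<noteq> j \<longrightarrow> L i \<noteq> L j"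
    and k: "0 < k"
  shows "I_co L n k = {1..min (k-1) n}"
proof
  show "I_co L n k \<subseteq> {1..min (k-1) n}" using I_co_sub[OF pos sorted k] .
  show "{1..min (k-1) n} \<subseteq> I_co L n k"
  proof
    fix i assume i: "i \<in> {1..min (k-1) n}"
    show "i \<in> I_co L n k"
    proof (cases "k \<le> n")
      case True
      have "L k \<le> L i" "L k \<noteq> L i" using sorted dist i True k by auto
      thus ?thesis using i True by (auto simp: I_co_def L_co_def)
    next
      case False thus ?thesis using i pos by (auto simp: I_co_def L_co_def)
    qed
  qed
qed

lemma cd_real_bounds:
  assumes "0 < i"
  shows "real k / real i \<le> real (ceil_div k i) \<and> real (ceil_div k i) \<le> real k / real i + 1"
proof -
  have a: "k \<le> ceil_div k i * i" and b: "ceil_div k i * i < k + i"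
    using ceil_div_bounds[OF assms] by auto
  have ir: "0 < real i" using assms by simp
  have "real k \<le> real (ceil_div k i) * real i" using a by (metis of_nat_le_iff of_nat_mult)
  hence 1: "real k / real i \<le> real (ceil_div k i)" using ir by (simp add: pos_divide_le_eq)
  have "real (ceil_div k i) * real i \<le> real k + real i" using b
    by (metis less_imp_le of_nat_le_iff of_nat_mult of_nat_add)
  hence "real (ceil_div k i) \<le> (real k + real i) / real i" using ir by (simp add: pos_le_divide_eq)
  also have "\<dots> = real k / real i + 1" using ir by (simp add: field_simps)
  finally show ?thesis using 1 by simp
qed

lemma harm_sum: "(\<Sum>i=1..m. real k / real i) = real k * harm m"
  unfolding harm_def by (simp add: sum_distrib_left divide_inverse)

lemma harm_upper: "1 \<le> m \<Longrightarrow> harm m \<le> ln (real m) + (1::real)"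
  using euler_mascheroni_sequence_decreasing[of 1 m] by (simp add: harm_def)

lemma sum_cd_upper:
  "real (\<Sum>i=1..m. ceil_div k i) \<le> real k * harm m + real m"
proof -
  have "real (\<Sum>i=1..m. ceil_div k i) = (\<Sum>i=1..m. real (ceil_div k i))" by simp
  also have "\<dots> \<le> (\<Sum>i=1..m. real k / real i + 1)"
    using cd_real_bounds by (intro sum_mono) auto
  also have "\<dots> = (\<Sum>i=1..m. real k / real i) + real m" by (simp add: sum.distrib)
  also have "\<dots> = real k * harm m + real m" using harm_sum[of k m] by (simp only:)
  finally show ?thesis .
qed

lemma sum_cd_lower:
  "real k * harm m \<le> real (\<Sum>i=1..m. ceil_div k i)"
proof -
  have "real k * harm m = (\<Sum>i=1..m. real k / real i)" by (rule harm_sum[symmetric])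
  also have "\<dots> \<le> (\<Sum>i=1..m. real (ceil_div k i))"
    using cd_real_bounds by (intro sum_mono) auto
  finally show ?thesis by simp
qed

lemma asym:
  fixes L' :: "nat \<Rightarrow> rat" and n' k' :: nat
  assumes n2: "2 \<le> n'" and k2: "2 \<le> k'" and pos: "\<forall>i\<in>{1..n'}. 0 < L' i"
    and sorted: "\<forall>i\<in>{1..n'}. \<forall>j\<in>{1..n'}. i \<le> j \<longrightarrow> L' j \<le> L' i"
  shows "card (I_co L' n' k') \<le> min (k' - 1) n'
              \<and> real (size (candidates L' (I_co L' n' k') (\<lambda>i. 1) (\<lambda>i. ceil_div k' i)))
                  \<le> 4 * real k' * ln (real (min k' n'))
              \<and> ((\<forall>i\<in>{1..n'}. \<forall>j\<in>{1..n'}. i \<noteq> j \<longrightarrow> L' i \<noteq> L' j) \<longrightarrow>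
                   card (I_co L' n' k') = min (k' - 1) n'
                   \<and> 1 * real k' * ln (real (min k' n'))
                     \<le> real (size (candidates L' (I_co L' n' k') (\<lambda>i. 1) (\<lambda>i. ceil_div k' i))))"
proof -
  define m where "m = min (k' - 1) n'"
  define M where "M = min k' n'"
  have k0: "0 < k'" using k2 by simp
  have sub: "I_co L' n' k' \<subseteq> {1..m}" using I_co_sub[OF pos sorted k0] by (simp add: m_def)
  have fin: "finite (I_co L' n' k')" using sub finite_subset by blast
  have sz: "size (candidates L' (I_co L' n' k') (\<lambda>i. 1) (\<lambda>i. ceil_div k' i)) = (\<Sum>i\<in>I_co L' n' k'. ceil_div k' i)"
    by (rule size_cand[OF fin])
  have m1: "1 \<le> m" using n2 k2 by (simp add: m_def)
  have mM: "m \<le> M" "M \<le> m + 1" "m \<le> k'" by (auto simp: m_def M_def)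
  have M2: "2 \<le> M" using n2 k2 by (simp add: M_def)
  have lnM: "2/3 \<le> ln (real M)"
  proof -
    have "ln 2 \<le> ln (real M)" using M2 by simp
    thus ?thesis using ln2_ge_two_thirds by simp
  qed
  have c1: "card (I_co L' n' k') \<le> m" using card_mono[OF _ sub] by simp
  have up: "real (\<Sum>i\<in>I_co L' n' k'. ceil_div k' i) \<le> 4 * real k' * ln (real M)"
  proof -
    have "(\<Sum>i\<in>I_co L' n' k'. ceil_div k' i) \<le> (\<Sum>i=1..m. ceil_div k' i)"
      using sub by (intro sum_mono2) auto
    hence "real (\<Sum>i\<in>I_co L' n' k'. ceil_div k' i) \<le> real (\<Sum>i=1..m. ceil_div k' i)"
      by (metis of_nat_le_iff)
    also have "\<dots> \<le> real k' * harm m + real m" by (rule sum_cd_upper)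
    also have "\<dots> \<le> real k' * (ln (real M) + 1) + real k'"
    proof -
      have "harm m \<le> ln (real m) + (1::real)" using harm_upper m1 by simp
      also have "ln (real m) \<le> ln (real M)" using mM m1 by simp
      finally have "real k' * harm m \<le> real k' * (ln (real M) + 1)" by (simp add: mult_left_mono)
      thus ?thesis using mM by simp
    qed
    also have "\<dots> \<le> 4 * real k' * ln (real M)"
    proof -
      have "real k' * 2 \<le> real k' * (3 * ln (real M))" using lnM by (intro mult_left_mono) auto
      thus ?thesis by (simp add: algebra_simps)
    qed
    finally show ?thesis .
  qed
  have dist: "card (I_co L' n' k') = m \<and> 1 * real k' * ln (real M)
       \<le> real (\<Sum>i\<in>I_co L' n' k'. ceil_div k' i)"
    if d: "\<forall>i\<in>{1..n'}. \<forall>j\<in>{1..n'}. i \<noteq> j \<longrightarrow> L' i \<noteq> L' j"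
  proof -
    have eq: "I_co L' n' k' = {1..m}" using I_co_eq[OF pos sorted d k0] by (simp add: m_def)
    have "1 * real k' * ln (real M) \<le> real k' * ln (real m + 1)"
    proof -
      have "ln (real M) \<le> ln (real m + 1)" using mM M2 by simp
      thus ?thesis by (simp add: mult_left_mono)
    qed
    also have "\<dots> \<le> real k' * harm m" using ln_le_harm by (simp add: mult_left_mono)
    also have "\<dots> \<le> real (\<Sum>i=1..m. ceil_div k' i)" by (rule sum_cd_lower)
    finally show ?thesis using eq by simp
  qed
  show ?thesis using c1 up dist sz by (simp add: m_def M_def)
qed

theorem mainTheorem11:
  fixes L :: "nat \<Rightarrow> rat" and n k :: nat
  assumes n_pos: "1 \<le> n"
    and pos: "\<forall>i\<in>{1..n}. 0 < L i"
    and sorted: "\<forall>i\<in>{1..n}. \<forall>j\<in>{1..n}. i \<le> j \<longrightarrow> L j \<le> L i"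
    and k_pos: "0 < k"
    and co: "L_co L n k \<noteq> lstar L n k"
  shows "admissible_restriction L n k (I_co L n k) (\<lambda>i. 1) (\<lambda>i. ceil_div k i)
       \<and> size (candidates L (I_co L n k) (\<lambda>i. 1) (\<lambda>i. ceil_div k i))
           = (\<Sum>i\<in>I_co L n k. ceil_div k i)
       \<and> (\<exists>c1 c2 :: real. 0 < c1 \<and> 0 < c2 \<and>
           (\<forall>(L' :: nat \<Rightarrow> rat) n' k'. 2 \<le> n' \<longrightarrow> 2 \<le> k' \<longrightarrow>
              (\<forall>i\<in>{1..n'}. 0 < L' i) \<longrightarrow>
              (\<forall>i\<in>{1..n'}. \<forall>j\<in>{1..n'}. i \<le> j \<longrightarrow> L' j \<le> L' i) \<longrightarrow>
              card (I_co L' n' k') \<le> min (k' - 1) n'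
              \<and> real (size (candidates L' (I_co L' n' k') (\<lambda>i. 1) (\<lambda>i. ceil_div k' i)))
                  \<le> c2 * real k' * ln (real (min k' n'))
              \<and> ((\<forall>i\<in>{1..n'}. \<forall>j\<in>{1..n'}. i \<noteq> j \<longrightarrow> L' i \<noteq> L' j) \<longrightarrow>
                   card (I_co L' n' k') = min (k' - 1) n'
                   \<and> c1 * real k' * ln (real (min k' n'))
                     \<le> real (size (candidates L' (I_co L' n' k') (\<lambda>i. 1) (\<lambda>i. ceil_div k' i))))))"
proof -
  have top: "\<forall>j\<in>{1..n}. L j \<le> L 1" using sorted n_pos by auto
  have ls: "feasible L n k (lstar L n k)" "\<forall>l. feasible L n k l \<longrightarrow> l \<le> lstar L n k"
    using lstar_props[OF n_pos pos top k_pos] by auto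
  have fin: "finite (I_co L n k)" unfolding I_co_def by simp
  have sub: "I_co L n k \<subseteq> {1..n}" unfolding I_co_def by auto
  have cdpos: "0 < ceil_div k i" if "0 < i" for i
    using ceil_div_bounds[OF that, of k] k_pos by (cases "ceil_div k i") auto
  have feas2: "feasible L n k (L i / of_nat (ceil_div k i))" if i: "i \<in> {1..n}" for i
  proof -
    have i0: "0 < i" using i by simp
    have c: "0 < ceil_div k i" using cdpos[OF i0] .
    have Li: "0 < L i" using pos i by auto
    have l: "0 < L i / of_nat (ceil_div k i)" using Li c by simp
    have "of_nat (ceil_div k i) * (L i / of_nat (ceil_div k i)) \<le> L i" using c by simp
    hence "int (i * ceil_div k i) \<le> num_pieces L n (L i / of_nat (ceil_div k i))"
      using pieces_lower[OF pos sorted i c l] by blast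
    moreover have "k \<le> i * ceil_div k i" using ceil_div_bounds[OF i0, of k] by (simp add: mult.commute)
    hence "int k \<le> int (i * ceil_div k i)" by (simp only: of_nat_le_iff)
    ultimately show ?thesis using l unfolding feasible_def by linarith
  qed
  have part3: "feasible L n k (L i') \<and> L i' \<noteq> lstar L n k" if i': "i' \<in> {1..n} - I_co L n k" for i'
  proof -
    have i'n: "i' \<in> {1..n}" and le: "L i' \<le> L_co L n k" using i' by (auto simp: I_co_def)
    have Li': "0 < L i'" using pos i'n by auto
    have kn: "k \<le> n"
    proof (rule ccontr)
      assume "\<not> k \<le> n" thus False using le Li' by (simp add: L_co_def)
    qed
    have kk: "k \<in> {1..n}" using kn k_pos by simp
    have Lk: "L i' \<le> L k" using le kn by (simp add: L_co_def)
    have feasl: "feasible L n k l" if "0 < l" "l \<le> L k" for l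
    proof -
      have "int (k * 1) \<le> num_pieces L n l"
        using pieces_lower[OF pos sorted kk _ that(1), of 1] that(2) by simp
      thus ?thesis using that by (simp add: feasible_def)
    qed
    have f1: "feasible L n k (L i')" using feasl Li' Lk by simp
    have "L k \<le> lstar L n k" using ls feasl[of "L k"] pos kk by auto
    moreover have "L k \<noteq> lstar L n k" using co kn by (simp add: L_co_def)
    ultimately have "L i' < lstar L n k" using Lk by simp
    thus ?thesis using f1 by simp
  qed
  have adm: "admissible_restriction L n k (I_co L n k) (\<lambda>i. 1) (\<lambda>i. ceil_div k i)"
    unfolding admissible_restriction_def
    using sub cdpos feas2 part3 by (auto simp: I_co_def)
  have sz: "size (candidates L (I_co L n k) (\<lambda>i. 1) (\<lambda>i. ceil_div k i))
           = (\<Sum>i\<in>I_co L n k. ceil_div k i)" by (rule size_cand[OF fin])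
  have as: "\<exists>c1 c2 :: real. 0 < c1 \<and> 0 < c2 \<and>
           (\<forall>(L' :: nat \<Rightarrow> rat) n' k'. 2 \<le> n' \<longrightarrow> 2 \<le> k' \<longrightarrow>
              (\<forall>i\<in>{1..n'}. 0 < L' i) \<longrightarrow>
              (\<forall>i\<in>{1..n'}. \<forall>j\<in>{1..n'}. i \<le> j \<longrightarrow> L' j \<le> L' i) \<longrightarrow>
              card (I_co L' n' k') \<le> min (k' - 1) n'
              \<and> real (size (candidates L' (I_co L' n' k') (\<lambda>i. 1) (\<lambda>i. ceil_div k' i)))
                  \<le> c2 * real k' * ln (real (min k' n'))
              \<and> ((\<forall>i\<in>{1..n'}. \<forall>j\<in>{1..n'}. i \<noteq> j \<longrightarrow> L' i \<noteq> L' j) \<longrightarrow>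
                   card (I_co L' n' k') = min (k' - 1) n'
                   \<and> c1 * real k' * ln (real (min k' n'))
                     \<le> real (size (candidates L' (I_co L' n' k') (\<lambda>i. 1) (\<lambda>i. ceil_div k' i)))))"
    apply (rule exI[of _ 1], rule exI[of _ 4])
    using asym by simp
  show ?thesis using adm sz as by blast
qed

end
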